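(* Let $n\ge1$, $\lambda_s>0$, $\lambda>0$ and $n_0\ge 3$. Then for every node $i\in\{1,\dots,n_0\}$, $$\Delta^{r(n_0)}_1\le \Delta^{\ell(n_0)}_i\le 2\,\Delta^{r(n_0)}_1 .$$
   Context: Version-age model. A gossip network on a finite node set $\mathcal N$ is specified by source rates $\lambda_{0j}>0$ ($j\in\mathcal N$) and gossip rates $\lambda_{ij}\ge 0$ for ordered pairs $i\neq j$ in $\mathcal N$ ($\lambda_{ij}$ is the rate at which node $i$ sends updates to node $j$); $\lambda_s>0$ is the source's own update rate. For nonempty $S\subseteq\mathcal N$ let $N(S)=\{i\in\mathcal N\setminus S:\ \sum_{j\in S}\lambda_{ij}>0\}$. The version ages $\Delta_S$ ($\emptyset\neq S\subseteq\mathcal N$) are the numbers defined by $$\Delta_S=\frac{\lambda_s+\sum_{i\in N(S)}\big(\sum_{j\in S}\lambda_{ij}\big)\Delta_{S\cup\{i\}}}{\sum_{j\in S}\lambda_{0j}+\sum_{i\in N(S)}\sum_{j\in S}\lambda_{ij}},$$ which is well defined by downward induction on $|S|$. Write $\Delta_i=\Delta_{\{i\}}$. Line network $L(n_0)$ with parameter $n$: node set $\{1,\dots,n_0\}$, $\lambda_{0j}=\lambda/n$ for all $j$, $\lambda_{i,i+1}=\lambda_{i+1,i}=\lambda/2$ for $1\le i\le n_0-1$, all other $\lambda_{ij}=0$; $\Delta^{\ell(n_0)}_i$ denotes $\Delta_i$ in it. Ring network $R(n_0)$ ($n_0\ge3$) with parameter $n$: the same as $L(n_0)$ plus $\lambda_{n_0,1}=\lambda_{1,n_0}=\lambda/2$;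 $\Delta^{r(n_0)}_i$ denotes $\Delta_i$ in it. *)

theory Defs
  imports Main "HOL.Real"
begin

text \<open>A gossip network: node set N, source rates l0, gossip rates l (l i j = rate
from i to j), source update rate ls.  N(S) = nodes outside S gossiping into S.\<close>

definition nbr :: "'a set \<Rightarrow> ('a \<Rightarrow> 'a \<Rightarrow> real) \<Rightarrow> 'a set \<Rightarrow> 'a set" where
  "nbr N l S = {i \<in> N - S. (\<Sum>j\<in>S. l i j) > 0}"

function vage :: "'a set \<Rightarrow> ('a \<Rightarrow> real) \<Rightarrow> ('a \<Rightarrow> 'a \<Rightarrow> real) \<Rightarrow> real \<Rightarrow> 'a set \<Rightarrow> real" where
  "vage N l0 l ls S =
     (if finite N \<and> S \<subseteq> N \<and> S \<noteq> {} then
        (ls + (\<Sum>i\<in>nbr N l S. (\<Sum>j\<in>S. l i j) * vage N l0 l ls (insert i S)))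
        / ((\<Sum>j\<in>S. l0 j) + (\<Sum>i\<in>nbr N l S. \<Sum>j\<in>S. l i j))
      else 0)"
  by pat_completeness auto
termination
proof (relation "measure (\<lambda>(N, l0, l, ls, S). card (N - S))")
  show "wf (measure (\<lambda>(N, l0, l, ls, S). card (N - S)))" by simp
next
  fix N :: "'a set" and l0 l ls S i
  assume h: "finite N \<and> S \<subseteq> N \<and> S \<noteq> {}" and i: "i \<in> nbr N l S"
  then have "i \<in> N - S" by (simp add: nbr_def)
  then have "card (N - insert i S) < card (N - S)"
    using h by (metis Diff_insert card_Diff1_less finite_Diff)
  then show "((N, l0, l, ls, insert i S), N, l0, l, ls, S)
      \<in> measure (\<lambda>(N, l0, l, ls, S). card (N - S))" by simp
qed

declare vage.simps [simp del]

definition line_rates :: "real \<Rightarrow> nat \<Rightarrow> nat \<Rightarrow> real" where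
  "line_rates lam i j = (if j = i + 1 \<or> i = j + 1 then lam / 2 else 0)"

definition ring_rates :: "nat \<Rightarrow> real \<Rightarrow> nat \<Rightarrow> nat \<Rightarrow> real" where
  "ring_rates n0 lam i j =
     (if j = i + 1 \<or> i = j + 1 \<or> (i = n0 \<and> j = 1) \<or> (i = 1 \<and> j = n0) then lam / 2 else 0)"

definition line_age :: "nat \<Rightarrow> nat \<Rightarrow> real \<Rightarrow> real \<Rightarrow> nat \<Rightarrow> real" where
  "line_age n0 n lam ls i = vage {1..n0} (\<lambda>_. lam / real n) (line_rates lam) ls {i}"

definition ring_age :: "nat \<Rightarrow> nat \<Rightarrow> real \<Rightarrow> real \<Rightarrow> nat \<Rightarrow> real" where
  "ring_age n0 n lam ls i = vage {1..n0} (\<lambda>_. lam / real n) (ring_rates n0 lam) ls {i}"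

end

theory Submission imports Defs begin


lemma vage_unfold: "finite N \<Longrightarrow> S \<subseteq> N \<Longrightarrow> S \<noteq> {} \<Longrightarrow> vage N l0 l ls S =
  (ls + (\<Sum>i\<in>nbr N l S. (\<Sum>j\<in>S. l i j) * vage N l0 l ls (insert i S)))
        / ((\<Sum>j\<in>S. l0 j) + (\<Sum>i\<in>nbr N l S. \<Sum>j\<in>S. l i j))"
  by (subst vage.simps) simp

lemma gen_bound:
  assumes fin: "finite N" and a: "a > 0" and l0: "\<And>j. l0 j = a"
  and closed: "\<And>S i. P S \<Longrightarrow> S \<subseteq> N \<Longrightarrow> S \<noteq> {} \<Longrightarrow> i \<in> nbr N l S \<Longrightarrow> P (insert i S)"
  and step: "\<And>S. P S \<Longrightarrow> S \<subseteq> N \<Longrightarrow> S \<noteq> {} \<Longrightarrow>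
     Y (card S) * (real (card S) * a + (\<Sum>i\<in>nbr N l S. \<Sum>j\<in>S. l i j))
       \<le> ls + (\<Sum>i\<in>nbr N l S. \<Sum>j\<in>S. l i j) * Y (Suc (card S))"
  and stepU: "\<And>S. P S \<Longrightarrow> S \<subseteq> N \<Longrightarrow> S \<noteq> {} \<Longrightarrow>
     Z (card S) * (real (card S) * a + (\<Sum>i\<in>nbr N l S. \<Sum>j\<in>S. l i j))
       \<ge> ls + (\<Sum>i\<in>nbr N l S. \<Sum>j\<in>S. l i j) * Z (Suc (card S))"
  shows "P S \<Longrightarrow> S \<subseteq> N \<Longrightarrow> S \<noteq> {} \<Longrightarrow> Y (card S) \<le> vage N l0 l ls S \<and> vage N l0 l ls S \<le> Z (card S)"
proof (induction "card N - card S" arbitrary: S rule: less_induct)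
  case less
  define w where "w i = (\<Sum>j\<in>S. l i j)" for i
  define r where "r = (\<Sum>i\<in>nbr N l S. w i)"
  define V where "V i = vage N l0 l ls (insert i S)" for i
  have finS: "finite S" using less fin finite_subset by blast
  have nbrN: "nbr N l S \<subseteq> N - S" by (auto simp: nbr_def)
  have finnbr: "finite (nbr N l S)" using nbrN fin finite_subset by blast
  have wpos: "\<And>i. i \<in> nbr N l S \<Longrightarrow> w i > 0" by (auto simp: nbr_def w_def)
  have IH: "Y (Suc (card S)) \<le> V i \<and> V i \<le> Z (Suc (card S))" if i: "i \<in> nbr N l S" for i
  proof -
    have iN: "i \<in> N" "i \<notin> S" using nbrN i by auto
    have c: "card (insert i S) = Suc (card S)" using iN finS by simp
    have "card (insert i S) \<le> card N" using iN less.prems fin by (intro card_mono) auto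
    then have lt: "card N - card (insert i S) < card N - card S" using c by simp
    show ?thesis using less.hyps[OF lt] closed[OF less.prems i] iN less.prems c
      unfolding V_def by auto
  qed
  have sum0: "(\<Sum>j\<in>S. l0 j) = real (card S) * a" using l0 by simp
  have r0: "r \<ge> 0" unfolding r_def using wpos by (intro sum_nonneg) (auto intro: less_imp_le)
  have cS: "card S > 0" using finS less.prems by auto
  have den: "real (card S) * a + r > 0" using cS a r0 by (simp add: add_pos_nonneg)
  have veq: "vage N l0 l ls S = (ls + (\<Sum>i\<in>nbr N l S. w i * V i)) / (real (card S) * a + r)"
    using vage_unfold[OF fin less.prems(2,3)] sum0 unfolding w_def r_def V_def by simp
  have n1: "r * Y (Suc (card S)) \<le> (\<Sum>i\<in>nbr N l S. w i * V i)"
    unfolding r_def sum_distrib_right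
    by (intro sum_mono mult_left_mono) (use IH wpos in \<open>auto intro: less_imp_le\<close>)
  have n2: "(\<Sum>i\<in>nbr N l S. w i * V i) \<le> r * Z (Suc (card S))"
    unfolding r_def sum_distrib_right
    by (intro sum_mono mult_left_mono) (use IH wpos in \<open>auto intro: less_imp_le\<close>)
  have s1: "Y (card S) * (real (card S) * a + r) \<le> ls + r * Y (Suc (card S))"
    using step[OF less.prems] unfolding r_def w_def .
  have s2: "ls + r * Z (Suc (card S)) \<le> Z (card S) * (real (card S) * a + r)"
    using stepU[OF less.prems] unfolding r_def w_def .
  show ?case unfolding veq using s1 s2 n1 n2 den
    by (simp add: pos_le_divide_eq pos_divide_le_eq)
qed



fun D :: "real \<Rightarrow> real \<Rightarrow> real \<Rightarrow> nat \<Rightarrow> nat \<Rightarrow> real" where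
  "D ls a g m 0 = ls / (real m * a)"
| "D ls a g m (Suc j) = (ls + g * D ls a g m j) / (real (m - Suc j) * a + g)"

definition RR :: "real \<Rightarrow> real \<Rightarrow> real \<Rightarrow> nat \<Rightarrow> nat \<Rightarrow> real" where
  "RR ls a g m k = D ls a g m (m - k)"

context
  fixes ls a g :: real and m :: nat
  assumes ls: "ls > 0" and a: "a > 0" and g: "g > 0" and m: "m \<ge> 1"
begin

lemma D_pos: "D ls a g m j > 0"
proof (induction j)
  case 0 then show ?case using ls a m by simp
next
  case (Suc j)
  have "real (m - Suc j) * a + g > 0" using a g by (simp add: add_nonneg_pos)
  moreover have "ls + g * D ls a g m j > 0" using Suc ls g by (simp add: add_pos_pos)
  ultimately show ?case by (simp only: D.simps) (rule divide_pos_pos)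
qed

lemma D_bound: "j < m \<Longrightarrow> D ls a g m j * (real (m - j) * a) \<le> ls"
proof (induction j)
  case 0 then show ?case using ls a m by simp
next
  case (Suc j)
  define k where "k = m - Suc j"
  have mk: "m - j = Suc k" using Suc.prems k_def by simp
  have k1: "k \<ge> 1" using Suc.prems k_def by simp
  have X: "D ls a g m j * (real (Suc k) * a) \<le> ls" using Suc mk by simp
  have X0: "D ls a g m j > 0" by (rule D_pos)
  have Xk: "D ls a g m j * (real k * a) \<le> ls"
    using X X0 a by (smt (verit) mult_left_mono of_nat_Suc distrib_right mult.commute mult_pos_pos of_nat_0_le_iff)
  have den: "real k * a + g > 0" using a g by (simp add: add_nonneg_pos)
  have "(ls + g * D ls a g m j) * (real k * a) \<le> ls * (real k * a + g)"
    using Xk g by (simp add: algebra_simps)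
  then show ?case using den k_def by (simp add: pos_divide_le_eq mult.commute)
qed

lemma RR_rec: "k < m \<Longrightarrow> RR ls a g m k = (ls + g * RR ls a g m (Suc k)) / (real k * a + g)"
proof -
  assume k: "k < m"
  have "m - k = Suc (m - Suc k)" using k by simp
  moreover have "m - Suc (m - Suc k) = k" using k by simp
  ultimately show ?thesis unfolding RR_def by simp
qed

lemma RR_pos: "RR ls a g m k > 0" unfolding RR_def by (rule D_pos)

lemma RR_bound: "1 \<le> k \<Longrightarrow> k \<le> m \<Longrightarrow> RR ls a g m k * (real k * a) \<le> ls"
  unfolding RR_def using D_bound[of "m - k"] by simp

lemma RR_top: "RR ls a g m m * (real m * a) = ls"
  unfolding RR_def using a m by simp

lemma RR_eq: "1 \<le> k \<Longrightarrow> k < m \<Longrightarrow> RR ls a g m k * (real k * a + g) = ls + g * RR ls a g m (Suc k)"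
proof -
  assume "1 \<le> k" "k < m"
  have den: "real k * a + g > 0" using a g by (simp add: add_nonneg_pos)
  show ?thesis using RR_rec[OF \<open>k < m\<close>] den by simp
qed

lemma RR_Xk: "1 \<le> k \<Longrightarrow> k < m \<Longrightarrow> RR ls a g m (Suc k) * (real k * a) \<le> ls"
proof -
  assume "1 \<le> k" "k < m"
  have X: "RR ls a g m (Suc k) * (real (Suc k) * a) \<le> ls" using RR_bound[of "Suc k"] \<open>k < m\<close> by simp
  have X0: "RR ls a g m (Suc k) > 0" by (rule RR_pos)
  have "RR ls a g m (Suc k) * (real k * a) \<le> RR ls a g m (Suc k) * (real (Suc k) * a)"
    using X0 a by (intro mult_left_mono) auto
  then show ?thesis using X by simp
qed

lemma RR_lower: "1 \<le> k \<Longrightarrow> k < m \<Longrightarrow> r \<le> g \<Longrightarrow>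
   RR ls a g m k * (real k * a + r) \<le> ls + r * RR ls a g m (Suc k)"
proof -
  assume k: "1 \<le> k" "k < m" and r: "r \<le> g"
  define X where "X = RR ls a g m (Suc k)"
  define K where "K = real k * a"
  have den: "K + g > 0" using a g unfolding K_def by (simp add: add_nonneg_pos)
  have Yd: "RR ls a g m k = (ls + g * X) / (K + g)" using RR_rec[OF k(2)] unfolding X_def K_def .
  have xk: "X * K \<le> ls" using RR_Xk[OF k] unfolding X_def K_def .
  have h: "0 \<le> (g - r) * (ls - X * K)" using r xk by (intro mult_nonneg_nonneg) auto
  have id: "(ls + r * X) * (K + g) - (ls + g * X) * (K + r) = (g - r) * (ls - X * K)" by algebra
  have "(ls + g * X) * (K + r) \<le> (ls + r * X) * (K + g)" using h id by linarith
  then have "(ls + g * X) / (K + g) * (K + r) \<le> ls + r * X" using den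
    by (simp add: divide_le_eq mult.commute mult.left_commute) 
  then show ?thesis unfolding Yd X_def K_def .
qed

lemma RR_upper2: "1 \<le> k \<Longrightarrow> k < m \<Longrightarrow> g / 2 \<le> r \<Longrightarrow> r \<le> g \<Longrightarrow>
   ls + r * (2 * RR ls a g m (Suc k)) \<le> 2 * RR ls a g m k * (real k * a + r)"
proof -
  assume k: "1 \<le> k" "k < m" and r: "g / 2 \<le> r" "r \<le> g"
  define X where "X = RR ls a g m (Suc k)"
  define K where "K = real k * a"
  have den: "K + g > 0" using a g unfolding K_def by (simp add: add_nonneg_pos)
  have Yd: "RR ls a g m k = (ls + g * X) / (K + g)" using RR_rec[OF k(2)] unfolding X_def K_def .
  have x0: "X > 0" unfolding X_def by (rule RR_pos)
  have K0: "K \<ge> 0" using a unfolding K_def by simp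
  have h1: "0 \<le> ls * (K + 2 * r - g)" using ls K0 r by (intro mult_nonneg_nonneg) auto
  have h2: "0 \<le> 2 * X * K * (g - r)" using x0 K0 r by (intro mult_nonneg_nonneg) auto
  have id: "2 * (ls + g * X) * (K + r) - (ls + r * (2 * X)) * (K + g)
       = ls * (K + 2 * r - g) + 2 * X * K * (g - r)" by algebra
  have "(ls + r * (2 * X)) * (K + g) \<le> 2 * (ls + g * X) * (K + r)" using h1 h2 id by linarith
  then have "ls + r * (2 * X) \<le> 2 * ((ls + g * X) / (K + g)) * (K + r)" using den
    by (simp add: le_divide_eq mult.commute mult.left_commute)
  then show ?thesis unfolding Yd X_def K_def .
qed

end


lemma line_w:
  assumes "p \<le> q" "i \<notin> {p..q}"
  shows "(\<Sum>j\<in>{p..q}. line_rates lam i j) = (if Suc i = p \<or> i = Suc q then lam/2 else 0)"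
proof (cases "Suc i = p")
  case True
  have "(\<Sum>j\<in>{p..q}. line_rates lam i j) = (\<Sum>j\<in>{p..q}. if j = p then lam/2 else 0)"
    using True assms by (intro sum.cong) (auto simp: line_rates_def)
  then show ?thesis using True assms by simp
next
  case F: False
  show ?thesis
  proof (cases "i = Suc q")
    case True
    have "(\<Sum>j\<in>{p..q}. line_rates lam i j) = (\<Sum>j\<in>{p..q}. if j = q then lam/2 else 0)"
      using True assms by (intro sum.cong) (auto simp: line_rates_def)
    then show ?thesis using True assms by simp
  next
    case False
    have "(\<Sum>j\<in>{p..q}. line_rates lam i j) = (\<Sum>j\<in>{p..q}. 0)"
      using False F assms by (intro sum.cong) (auto simp: line_rates_def)
    then show ?thesis using False F by simp
  qed
qed

lemma line_nbr:
  assumes "lam > 0" "1 \<le> p" "p \<le> q" "q \<le> n0"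
  shows "nbr {1..n0} (line_rates lam) {p..q} = {i \<in> {1..n0}. Suc i = p \<or> i = Suc q}"
proof -
  have "nbr {1..n0} (line_rates lam) {p..q} = {i \<in> {1..n0} - {p..q}. Suc i = p \<or> i = Suc q}"
    unfolding nbr_def
  proof (rule Collect_cong)
    fix i
    show "(i \<in> {1..n0} - {p..q} \<and> 0 < (\<Sum>j\<in>{p..q}. line_rates lam i j)) =
          (i \<in> {1..n0} - {p..q} \<and> (Suc i = p \<or> i = Suc q))"
      using line_w[OF assms(3), of i lam] assms(1) by (auto split: if_splits)
  qed
  also have "\<dots> = {i \<in> {1..n0}. Suc i = p \<or> i = Suc q}" by auto
  finally show ?thesis .
qed

lemma line_r:
  assumes "lam > 0" "1 \<le> p" "p \<le> q" "q \<le> n0"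
  shows "(\<Sum>i\<in>nbr {1..n0} (line_rates lam) {p..q}. \<Sum>j\<in>{p..q}. line_rates lam i j)
     = lam / 2 * (of_bool (1 < p) + of_bool (q < n0))"
proof -
  let ?A = "{i \<in> {1..n0}. Suc i = p \<or> i = Suc q}"
  have "(\<Sum>i\<in>?A. \<Sum>j\<in>{p..q}. line_rates lam i j) = (\<Sum>i\<in>?A. lam / 2)"
    using line_w[OF assms(3)] by (intro sum.cong) auto
  also have "\<dots> = lam / 2 * real (card ?A)" by simp
  also have "card ?A = of_bool (1 < p) + of_bool (q < n0)"
  proof -
    have "?A = (if 1 < p then {p - 1} else {}) \<union> (if q < n0 then {Suc q} else {})"
      using assms by auto
    then show ?thesis using assms by auto
  qed
  finally show ?thesis using line_nbr[OF assms] by simp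
qed

lemma line_closed:
  assumes "lam > 0" "1 \<le> p" "p \<le> q" "q \<le> n0" "i \<in> nbr {1..n0} (line_rates lam) {p..q}"
  shows "\<exists>p' q'. 1 \<le> p' \<and> p' \<le> q' \<and> q' \<le> n0 \<and> insert i {p..q} = {p'..q'}"
proof -
  have i: "i \<in> {1..n0}" "Suc i = p \<or> i = Suc q" using assms(5) line_nbr[OF assms(1-4)] by auto
  show ?thesis
  proof (cases "Suc i = p")
    case True
    then have "insert i {p..q} = {i..q}" using assms by auto
    then show ?thesis using i True assms by auto
  next
    case False
    then have "i = Suc q" using i by auto
    then have "insert i {p..q} = {p..Suc q}" using assms by auto
    then show ?thesis using i \<open>i = Suc q\<close> assms by auto
  qed
qed



lemma ring_w:
  assumes n0: "n0 \<ge> 3" and qp: "1 \<le> q" "q < i" "i < p" "p \<le> Suc n0"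
  shows "(\<Sum>j\<in>{1..q} \<union> {p..n0}. ring_rates n0 lam i j)
     = (if i = Suc q then lam/2 else 0) + (if Suc i = p then lam/2 else 0)"
proof -
  define c where "c = (if p \<le> n0 then p else 1)"
  let ?S = "{1..q} \<union> {p..n0}"
  have fin: "finite ?S" by simp
  have qS: "q \<in> ?S" "c \<in> ?S" using qp by (auto simp: c_def)
  have "(\<Sum>j\<in>?S. ring_rates n0 lam i j) = (\<Sum>j\<in>?S. (if j = q then (if i = Suc q then lam/2 else 0) else 0)
       + (if j = c then (if Suc i = p then lam/2 else 0) else 0))"
  proof (intro sum.cong refl)
    fix j assume j: "j \<in> ?S"
    show "ring_rates n0 lam i j = (if j = q then (if i = Suc q then lam/2 else 0) else 0)
       + (if j = c then (if Suc i = p then lam/2 else 0) else 0)"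
      using j n0 qp unfolding ring_rates_def c_def by auto
  qed
  also have "\<dots> = (if i = Suc q then lam/2 else 0) + (if Suc i = p then lam/2 else 0)"
    using qS fin by (simp add: sum.distrib)
  finally show ?thesis .
qed

lemma ring_nbr:
  assumes n0: "n0 \<ge> 3" and lam: "lam > 0" and qp: "1 \<le> q" "q < p" "p \<le> Suc n0"
  shows "nbr {1..n0} (ring_rates n0 lam) ({1..q} \<union> {p..n0})
       = {i \<in> {1..n0}. q < i \<and> i < p \<and> (i = Suc q \<or> Suc i = p)}"
  unfolding nbr_def
proof (rule Collect_cong)
  fix i
  show "(i \<in> {1..n0} - ({1..q} \<union> {p..n0}) \<and> 0 < (\<Sum>j\<in>{1..q} \<union> {p..n0}. ring_rates n0 lam i j)) =
        (i \<in> {1..n0} \<and> q < i \<and> i < p \<and> (i = Suc q \<or> Suc i = p))"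
  proof (cases "i \<in> {1..n0} \<and> q < i \<and> i < p")
    case True
    then have "i \<in> {1..n0} - ({1..q} \<union> {p..n0})" by auto
    moreover have "(\<Sum>j\<in>{1..q} \<union> {p..n0}. ring_rates n0 lam i j)
     = (if i = Suc q then lam/2 else 0) + (if Suc i = p then lam/2 else 0)"
      using ring_w[OF n0 qp(1) _ _ qp(3)] True by auto
    ultimately show ?thesis using True lam by auto
  next
    case False
    then show ?thesis using qp by auto
  qed
qed

lemma ring_r:
  assumes n0: "n0 \<ge> 3" and lam: "lam > 0" and qp: "1 \<le> q" "q < p" "p \<le> Suc n0"
  shows "(\<Sum>i\<in>nbr {1..n0} (ring_rates n0 lam) ({1..q} \<union> {p..n0}). \<Sum>j\<in>{1..q} \<union> {p..n0}. ring_rates n0 lam i j)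
     = (if Suc q = p then 0 else lam)"
proof -
  let ?A = "{i \<in> {1..n0}. q < i \<and> i < p \<and> (i = Suc q \<or> Suc i = p)}"
  have "(\<Sum>i\<in>?A. \<Sum>j\<in>{1..q} \<union> {p..n0}. ring_rates n0 lam i j)
      = (\<Sum>i\<in>?A. (if i = Suc q then lam/2 else 0) + (if Suc i = p then lam/2 else 0))"
    using ring_w[OF n0 qp(1) _ _ qp(3)] by (intro sum.cong) auto
  also have "\<dots> = (if Suc q = p then 0 else lam)"
  proof (cases "Suc q = p")
    case True
    then have "?A = {}" by auto
    then show ?thesis using True by simp
  next
    case F: False
    show ?thesis
    proof (cases "Suc (Suc q) = p")
      case True
      then have "?A = {Suc q}" using qp by auto
      then show ?thesis using True by simp
    next
      case False
      then have "?A = {Suc q, p - 1}" using qp F by auto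
      moreover have "Suc q \<noteq> p - 1" using False F qp by auto
      ultimately show ?thesis using False F qp by auto
    qed
  qed
  finally show ?thesis using ring_nbr[OF assms] by simp
qed

lemma ring_closed:
  assumes n0: "n0 \<ge> 3" and lam: "lam > 0" and qp: "1 \<le> q" "q < p" "p \<le> Suc n0"
   and i: "i \<in> nbr {1..n0} (ring_rates n0 lam) ({1..q} \<union> {p..n0})"
  shows "\<exists>q' p'. 1 \<le> q' \<and> q' < p' \<and> p' \<le> Suc n0 \<and> insert i ({1..q} \<union> {p..n0}) = {1..q'} \<union> {p'..n0}"
proof -
  have i: "i \<in> {1..n0}" "q < i" "i < p" "i = Suc q \<or> Suc i = p" using i ring_nbr[OF assms(1-5)] by auto
  show ?thesis
  proof (cases "i = Suc q")
    case True
    then have "insert i ({1..q} \<union> {p..n0}) = {1..Suc q} \<union> {p..n0}" by auto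
    then show ?thesis using i True qp by (intro exI[of _ "Suc q"] exI[of _ p]) auto
  next
    case False
    then have "Suc i = p" using i by auto
    then have "insert i ({1..q} \<union> {p..n0}) = {1..q} \<union> {i..n0}" using i by auto
    then show ?thesis using i qp by (intro exI[of _ q] exI[of _ i]) auto
  qed
qed



theorem mainTheorem2:
  fixes n n0 i :: nat and lam ls :: real
  assumes "n \<ge> 1" and "ls > 0" and "lam > 0" and "n0 \<ge> 3" and "i \<in> {1..n0}"
  shows "ring_age n0 n lam ls 1 \<le> line_age n0 n lam ls i
       \<and> line_age n0 n lam ls i \<le> 2 * ring_age n0 n lam ls 1"
proof -
  define a where "a = lam / real n"
  have a: "a > 0" using assms unfolding a_def by simp
  have m: "n0 \<ge> 1" using assms by simp
  define R where "R k = RR ls a lam n0 k" for k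
  define Z where "Z k = 2 * R k" for k
  have ls: "ls > 0" and lam: "lam > 0" and n0: "n0 \<ge> 3" using assms by auto
  note RL = RR_lower[OF ls a lam m] and RU = RR_upper2[OF ls a lam m]
    and RT = RR_top[OF ls a lam m] and RE = RR_eq[OF ls a lam m]
  define PL where "PL S = (\<exists>p q. 1 \<le> p \<and> p \<le> q \<and> q \<le> n0 \<and> S = {p..q})" for S
  define PR where "PR S = (\<exists>q p. 1 \<le> q \<and> q < p \<and> p \<le> Suc n0 \<and> S = {1..q} \<union> {p..n0})" for S
  have lineB: "R (card S) \<le> vage {1..n0} (\<lambda>_. a) (line_rates lam) ls S \<and>
               vage {1..n0} (\<lambda>_. a) (line_rates lam) ls S \<le> Z (card S)"
    if "PL S" "S \<subseteq> {1..n0}" "S \<noteq> {}" for S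
  proof (rule gen_bound[where P = PL, OF _ a _ _ _ _ that])
    show "finite {1..n0}" by simp
    show "(\<lambda>_. a) j = a" for j by simp
    show "PL (insert i S)" if "PL S" "S \<subseteq> {1..n0}" "S \<noteq> {}" "i \<in> nbr {1..n0} (line_rates lam) S" for S i
      using that line_closed[OF lam] unfolding PL_def by blast
  next
    fix S assume "PL S" "S \<subseteq> {1..n0}" "S \<noteq> {}"
    then obtain p q where pq: "1 \<le> p" "p \<le> q" "q \<le> n0" "S = {p..q}" unfolding PL_def by blast
    have r: "(\<Sum>i\<in>nbr {1..n0} (line_rates lam) S. \<Sum>j\<in>S. line_rates lam i j)
     = lam / 2 * (of_bool (1 < p) + of_bool (q < n0))" using line_r[OF lam pq(1-3)] pq(4) by simp
    have c: "card S = Suc q - p" using pq by simp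
    let ?r = "(\<Sum>i\<in>nbr {1..n0} (line_rates lam) S. \<Sum>j\<in>S. line_rates lam i j)"
    have both: "R (card S) * (real (card S) * a + ?r) \<le> ls + ?r * R (Suc (card S))
       \<and> ls + ?r * Z (Suc (card S)) \<le> Z (card S) * (real (card S) * a + ?r)"
    proof (cases "p = 1 \<and> q = n0")
      case True
      then have "card S = n0" "?r = 0" using r c by auto
      then show ?thesis using RT ls unfolding R_def Z_def by auto
    next
      case False
      then have h: "card S < n0" "1 \<le> card S" "lam / 2 * (of_bool (1 < p) + of_bool (q < n0)) \<le> lam"
           "lam / 2 \<le> lam / 2 * (of_bool (1 < p) + of_bool (q < n0))"
        using pq c lam by auto
      show ?thesis unfolding r R_def Z_def using RL[OF h(2,1,3)] RU[OF h(2,1,4,3)] by simp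
    qed
    then show "R (card S) * (real (card S) * a + ?r) \<le> ls + ?r * R (Suc (card S))"
      and "ls + ?r * Z (Suc (card S)) \<le> Z (card S) * (real (card S) * a + ?r)" by auto
  qed
  have ringB: "R (card S) \<le> vage {1..n0} (\<lambda>_. a) (ring_rates n0 lam) ls S \<and>
               vage {1..n0} (\<lambda>_. a) (ring_rates n0 lam) ls S \<le> R (card S)"
    if "PR S" "S \<subseteq> {1..n0}" "S \<noteq> {}" for S
  proof (rule gen_bound[where P = PR, OF _ a _ _ _ _ that])
    show "finite {1..n0}" by simp
    show "(\<lambda>_. a) j = a" for j by simp
    show "PR (insert i S)" if "PR S" "S \<subseteq> {1..n0}" "S \<noteq> {}" "i \<in> nbr {1..n0} (ring_rates n0 lam) S" for S i
      using that ring_closed[OF n0 lam] unfolding PR_def by blast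
  next
    fix S assume "PR S" "S \<subseteq> {1..n0}" "S \<noteq> {}"
    then obtain q p where pq: "1 \<le> q" "q < p" "p \<le> Suc n0" "S = {1..q} \<union> {p..n0}" unfolding PR_def by blast
    have r: "(\<Sum>i\<in>nbr {1..n0} (ring_rates n0 lam) S. \<Sum>j\<in>S. ring_rates n0 lam i j)
     = (if Suc q = p then 0 else lam)" using ring_r[OF n0 lam pq(1-3)] pq(4) by simp
    have c: "card S = q + (Suc n0 - p)" using pq by (simp add: card_Un_disjoint)
    show "R (card S) * (real (card S) * a + (\<Sum>i\<in>nbr {1..n0} (ring_rates n0 lam) S. \<Sum>j\<in>S. ring_rates n0 lam i j))
       \<le> ls + (\<Sum>i\<in>nbr {1..n0} (ring_rates n0 lam) S. \<Sum>j\<in>S. ring_rates n0 lam i j) * R (Suc (card S))"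
      and "ls + (\<Sum>i\<in>nbr {1..n0} (ring_rates n0 lam) S. \<Sum>j\<in>S. ring_rates n0 lam i j) * R (Suc (card S))
       \<le> R (card S) * (real (card S) * a + (\<Sum>i\<in>nbr {1..n0} (ring_rates n0 lam) S. \<Sum>j\<in>S. ring_rates n0 lam i j))"
    proof -
      show "R (card S) * (real (card S) * a + (\<Sum>i\<in>nbr {1..n0} (ring_rates n0 lam) S. \<Sum>j\<in>S. ring_rates n0 lam i j))
       \<le> ls + (\<Sum>i\<in>nbr {1..n0} (ring_rates n0 lam) S. \<Sum>j\<in>S. ring_rates n0 lam i j) * R (Suc (card S))"
      proof (cases "Suc q = p")
        case True
        then have "card S = n0" using c pq by simp
        then show ?thesis unfolding r using True RT unfolding R_def by simp
      next
        case False
        then have h: "1 \<le> card S" "card S < n0" using c pq by auto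
        show ?thesis unfolding r using False RL[OF h, of lam] unfolding R_def by simp
      qed
      show "ls + (\<Sum>i\<in>nbr {1..n0} (ring_rates n0 lam) S. \<Sum>j\<in>S. ring_rates n0 lam i j) * R (Suc (card S))
       \<le> R (card S) * (real (card S) * a + (\<Sum>i\<in>nbr {1..n0} (ring_rates n0 lam) S. \<Sum>j\<in>S. ring_rates n0 lam i j))"
      proof (cases "Suc q = p")
        case True
        then have "card S = n0" using c pq by simp
        then show ?thesis unfolding r using True RT unfolding R_def by simp
      next
        case False
        then have h: "1 \<le> card S" "card S < n0" using c pq by auto
        show ?thesis unfolding r using False RE[OF h] unfolding R_def by simp
      qed
    qed
  qed
  have L: "R 1 \<le> line_age n0 n lam ls i \<and> line_age n0 n lam ls i \<le> Z 1"
  proof -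
    have "PL {i..i}" using assms(5) unfolding PL_def by (intro exI[of _ i]) auto
    then show ?thesis using lineB[of "{i}"] assms(5) unfolding line_age_def a_def by simp
  qed
  have Rg: "R 1 \<le> ring_age n0 n lam ls 1 \<and> ring_age n0 n lam ls 1 \<le> R 1"
  proof -
    have "PR ({1..1} \<union> {Suc n0..n0})" using n0 unfolding PR_def by (intro exI[of _ 1] exI[of _ "Suc n0"]) auto
    then have "PR {1}" by simp
    then show ?thesis using ringB[of "{1}"] n0 unfolding ring_age_def a_def by simp
  qed
  show ?thesis using L Rg unfolding Z_def by linarith
qed


end
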